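(* Assume (i)–(iii) of the standing assumption below. Then: (1) $\mathcal S_{\mathrm{LP}}$ is the convex hull of a finite number $M$ of its extreme points $\xi^{*,1},\ldots,\xi^{*,M}$ (called modes). (2) $y^*\cdot\lambda=1$. (3) $z^*_k>0$ for every $k\in\mathcal K$. (4) For every potentially basic activity $j=(i,k)$ one has $y^*_i\mu_j=z^*_k$. (5) For every always nonbasic activity $j=(i,k)$ one has $y^*_i\mu_j<z^*_k$. (6) For every class $i\in\mathcal I$ there exists a potentially basic activity $j\in\mathcal J_i$. (7) $y^*_i>0$ for every $i\in\mathcal I$.
   Context: Let $\mathcal I$ (classes) and $\mathcal K$ (servers) be finite sets of cardinalities $I$ and $K$, and let $\mathcal J\subset\mathcal I\times\mathcal K$ (activities) have cardinality $J$. For $i\in\mathcal I$ let $\mathcal J_i=\{(i,k)\in\mathcal J\}$ and for $k\in\mathcal K$ let $\mathcal J^k=\{(i,k)\in\mathcal J\}$. Let $\lambda\in(0,\infty)^I$ and $\mu\in(0,\infty)^{\mathcal J}$. Let $R$ be the $I\times J$ matrix with $R_{ij}=\mu_j$ if $j\in\mathcal J_i$ and $R_{ij}=0$ otherwise, and $G$ the $K\times J$ matrix with $G_{kj}=1$ if $j\in\mathcal J^k$ and $0$ otherwise. The LP is: minimize $\rho$ over $(\xi,\rho)\in\mathbb R^J\times\mathbb R$ subject to $R\xi=\lambda$, $G\xi\le\rho 1_K$, $\xi\ge0$. The dual problem is: maximize $y\cdot\lambda$ over $(y,z)\in\mathbb R^I\times\mathbb R^K$ subject to $\sum_k z_k=1$,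 $yR\le zG$, $z\ge 0$. Standing assumption: (i) the optimal value of the LP is $\rho^*=1$; (ii) letting $\mathcal S_{\mathrm{LP}}=\{\xi:(\xi,1)\text{ is an optimal solution of the LP}\}$, every $\xi\in\mathcal S_{\mathrm{LP}}$ satisfies $(G\xi)_k=1$ for all $k\in\mathcal K$; (iii) the dual problem has a unique solution $(y^*,z^* )$. An activity $j$ is potentially basic if $\xi_j>0$ for some $\xi\in\mathcal S_{\mathrm{LP}}$, and always nonbasic otherwise. *)

theory Defs
  imports "HOL-Analysis.Analysis"
begin

text \<open>Classes are the elements of a finite type 'i, servers of a finite type 'k;
  activities form a set J of pairs (i,k).  Primal variables xi live in
  real^('i \<times> 'k) and are required to vanish outside J (so the primal variable
  space is a copy of R^J).\<close>

definition R_mult :: "('i::finite \<times> 'k::finite) set \<Rightarrow> ('i \<times> 'k \<Rightarrow> real) \<Rightarrow> real^('i \<times> 'k) \<Rightarrow> 'i \<Rightarrow> real" where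
  "R_mult J mu xi i = (\<Sum>k\<in>{k. (i,k) \<in> J}. mu (i,k) * xi $ (i,k))"

definition G_mult :: "('i::finite \<times> 'k::finite) set \<Rightarrow> real^('i \<times> 'k) \<Rightarrow> 'k \<Rightarrow> real" where
  "G_mult J xi k = (\<Sum>i\<in>{i. (i,k) \<in> J}. xi $ (i,k))"

definition lp_feasible ::
  "('i::finite \<times> 'k::finite) set \<Rightarrow> ('i \<times> 'k \<Rightarrow> real) \<Rightarrow> ('i \<Rightarrow> real) \<Rightarrow> real^('i \<times> 'k) \<Rightarrow> real \<Rightarrow> bool" where
  "lp_feasible J mu lam xi rho \<longleftrightarrow>
     (\<forall>i. R_mult J mu xi i = lam i) \<and> (\<forall>k. G_mult J xi k \<le> rho) \<and>
     (\<forall>j. 0 \<le> xi $ j) \<and> (\<forall>j. j \<notin> J \<longrightarrow> xi $ j = 0)"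

definition lp_optimal ::
  "('i::finite \<times> 'k::finite) set \<Rightarrow> ('i \<times> 'k \<Rightarrow> real) \<Rightarrow> ('i \<Rightarrow> real) \<Rightarrow> real^('i \<times> 'k) \<Rightarrow> real \<Rightarrow> bool" where
  "lp_optimal J mu lam xi rho \<longleftrightarrow> lp_feasible J mu lam xi rho \<and>
     (\<forall>xi' rho'. lp_feasible J mu lam xi' rho' \<longrightarrow> rho \<le> rho')"

definition S_LP ::
  "('i::finite \<times> 'k::finite) set \<Rightarrow> ('i \<times> 'k \<Rightarrow> real) \<Rightarrow> ('i \<Rightarrow> real) \<Rightarrow> (real^('i \<times> 'k)) set" where
  "S_LP J mu lam = {xi. lp_optimal J mu lam xi 1}"

definition dual_feasible ::
  "('i::finite \<times> 'k::finite) set \<Rightarrow> ('i \<times> 'k \<Rightarrow> real) \<Rightarrow> real^'i \<Rightarrow> real^'k \<Rightarrow> bool" where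
  "dual_feasible J mu y z \<longleftrightarrow> (\<Sum>k\<in>UNIV. z $ k) = 1 \<and>
     (\<forall>i k. (i,k) \<in> J \<longrightarrow> y $ i * mu (i,k) \<le> z $ k) \<and> (\<forall>k. 0 \<le> z $ k)"

definition dual_obj :: "('i::finite \<Rightarrow> real) \<Rightarrow> real^'i \<Rightarrow> real" where
  "dual_obj lam y = (\<Sum>i\<in>UNIV. y $ i * lam i)"

definition dual_optimal ::
  "('i::finite \<times> 'k::finite) set \<Rightarrow> ('i \<times> 'k \<Rightarrow> real) \<Rightarrow> ('i \<Rightarrow> real) \<Rightarrow> real^'i \<Rightarrow> real^'k \<Rightarrow> bool" where
  "dual_optimal J mu lam y z \<longleftrightarrow> dual_feasible J mu y z \<and>
     (\<forall>y' z'. dual_feasible J mu y' z' \<longrightarrow> dual_obj lam y' \<le> dual_obj lam y)"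

definition potentially_basic ::
  "('i::finite \<times> 'k::finite) set \<Rightarrow> ('i \<times> 'k \<Rightarrow> real) \<Rightarrow> ('i \<Rightarrow> real) \<Rightarrow> 'i \<times> 'k \<Rightarrow> bool" where
  "potentially_basic J mu lam j \<longleftrightarrow> j \<in> J \<and> (\<exists>xi\<in>S_LP J mu lam. xi $ j > 0)"

definition always_nonbasic ::
  "('i::finite \<times> 'k::finite) set \<Rightarrow> ('i \<times> 'k \<Rightarrow> real) \<Rightarrow> ('i \<Rightarrow> real) \<Rightarrow> 'i \<times> 'k \<Rightarrow> bool" where
  "always_nonbasic J mu lam j \<longleftrightarrow> j \<in> J \<and> \<not> potentially_basic J mu lam j"

end

theory Submission
  imports Defs "HOL-Analysis.Analysis"
begin


lemma farkas_idx:
  fixes f :: "'r \<Rightarrow> 'a::euclidean_space" and b :: 'a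
  assumes fin: "finite R"
    and nosep: "\<not> (\<exists>a. (\<forall>r\<in>R. a \<bullet> f r \<le> 0) \<and> 0 < a \<bullet> b)"
  shows "\<exists>c. (\<forall>r\<in>R. 0 \<le> c r) \<and> b = (\<Sum>r\<in>R. c r *\<^sub>R f r)"
proof (rule ccontr)
  assume nb: "\<not> ?thesis"
  define C where "C = {x. \<exists>c. (\<forall>r\<in>R. 0 \<le> c r) \<and> x = (\<Sum>r\<in>R. c r *\<^sub>R f r)}"
  have bC: "b \<notin> C" using nb by (auto simp: C_def)
  have cC: "convex_cone C"
    unfolding convex_cone_iff
  proof (intro conjI ballI allI impI)
    show "0 \<in> C" unfolding C_def by (rule CollectI, rule exI[of _ "\<lambda>_. 0"]) simp
  next
    fix x y assume "x \<in> C" "y \<in> C"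
    then obtain c d where c: "\<forall>r\<in>R. 0 \<le> c r" "x = (\<Sum>r\<in>R. c r *\<^sub>R f r)"
      and d: "\<forall>r\<in>R. 0 \<le> d r" "y = (\<Sum>r\<in>R. d r *\<^sub>R f r)" by (auto simp: C_def)
    show "x + y \<in> C" unfolding C_def
      by (rule CollectI, rule exI[of _ "\<lambda>r. c r + d r"])
         (simp add: c d scaleR_add_left sum.distrib)
  next
    fix x and t :: real assume "x \<in> C" "0 \<le> t"
    then obtain c where c: "\<forall>r\<in>R. 0 \<le> c r" "x = (\<Sum>r\<in>R. c r *\<^sub>R f r)" by (auto simp: C_def)
    show "t *\<^sub>R x \<in> C" unfolding C_def
      by (rule CollectI, rule exI[of _ "\<lambda>r. t * c r"])
         (simp add: c \<open>0 \<le> t\<close> scaleR_sum_right)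
  qed
  have sub: "f ` R \<subseteq> C"
  proof
    fix x assume "x \<in> f ` R"
    then obtain r0 where r0: "r0 \<in> R" "x = f r0" by auto
    have "(\<Sum>r\<in>R. (if r = r0 then 1 else 0) *\<^sub>R f r) = (\<Sum>r\<in>R. if r = r0 then f r else 0)"
      by (rule sum.cong) auto
    also have "\<dots> = x" using r0 fin by simp
    finally have "x = (\<Sum>r\<in>R. (if r = r0 then 1 else 0) *\<^sub>R f r)" by simp
    then show "x \<in> C" unfolding C_def
      by (intro CollectI exI[of _ "\<lambda>r. if r = r0 then 1 else 0"]) simp
  qed
  define H where "H = convex_cone hull (f ` R)"
  have HC: "H \<subseteq> C" unfolding H_def using sub cC by (rule hull_minimal)
  have bH: "b \<notin> H" using HC bC by auto
  have "closed H" unfolding H_def using fin by (simp add: closed_convex_cone_hull)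
  moreover have "convex H" unfolding H_def by (rule convex_convex_cone_hull)
  ultimately obtain a \<beta> where ab: "a \<bullet> b < \<beta>" and aH: "\<forall>x\<in>H. \<beta> < a \<bullet> x"
    using separating_hyperplane_closed_point bH by blast
  have "0 \<in> H" unfolding H_def by (rule convex_cone_hull_contains_0)
  with aH have beta: "\<beta> < 0" by fastforce
  have "\<forall>r\<in>R. (-a) \<bullet> f r \<le> 0"
  proof
    fix r assume r: "r \<in> R"
    show "(-a) \<bullet> f r \<le> 0"
    proof (rule ccontr)
      assume "\<not> (-a) \<bullet> f r \<le> 0"
      then have neg: "a \<bullet> f r < 0" by simp
      have fH: "f r \<in> H" unfolding H_def using r by (simp add: hull_inc)
      define t where "t = \<beta> / (a \<bullet> f r)"
      have "0 \<le> t" unfolding t_def using neg beta by (simp add: divide_nonpos_neg)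
      then have "t *\<^sub>R f r \<in> H" unfolding H_def using fH[unfolded H_def]
        by (simp add: convex_cone_hull_mul)
      with aH have "\<beta> < a \<bullet> (t *\<^sub>R f r)" by blast
      moreover have "a \<bullet> (t *\<^sub>R f r) = \<beta>" unfolding t_def using neg by simp
      ultimately show False by simp
    qed
  qed
  moreover have "0 < (-a) \<bullet> b" using ab beta by simp
  ultimately show False using nosep by blast
qed


lemma sum_UNIV_Plus:
  "(\<Sum>x\<in>(UNIV::('a::finite + 'b::finite) set). g x) = (\<Sum>a\<in>UNIV. g (Inl a)) + (\<Sum>b\<in>UNIV. g (Inr b))"
proof -
  have "(\<Sum>x\<in>(UNIV::('a + 'b) set). g x) = (\<Sum>x\<in>(UNIV <+> UNIV). g x)"
    by (simp only: UNIV_Plus_UNIV)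
  also have "\<dots> = (\<Sum>a\<in>UNIV. g (Inl a)) + (\<Sum>b\<in>UNIV. g (Inr b))"
    by (subst sum.Plus) (simp_all add: comp_def)
  finally show ?thesis .
qed

definition rowR :: "('i::finite \<times> 'k::finite) set \<Rightarrow> ('i \<times> 'k \<Rightarrow> real) \<Rightarrow> 'i \<Rightarrow> real^('i \<times> 'k)" where
  "rowR J mu i = (\<chi> j. if j \<in> J \<and> fst j = i then mu j else 0)"

definition rowG :: "('i::finite \<times> 'k::finite) set \<Rightarrow> 'k \<Rightarrow> real^('i \<times> 'k)" where
  "rowG J k = (\<chi> j. if j \<in> J \<and> snd j = k then 1 else 0)"

lemma R_inner: "R_mult J mu xi i = rowR J mu i \<bullet> xi"
proof -
  have "rowR J mu i \<bullet> xi = (\<Sum>j\<in>UNIV. if j \<in> J \<and> fst j = i then mu j * xi $ j else 0)"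
    unfolding rowR_def inner_vec_def by (rule sum.cong) auto
  also have "\<dots> = (\<Sum>j\<in>{j. j \<in> J \<and> fst j = i}. mu j * xi $ j)"
    by (simp add: sum.inter_filter[symmetric])
  also have "{j. j \<in> J \<and> fst j = i} = (\<lambda>k. (i,k)) ` {k. (i,k) \<in> J}" by force
  also have "(\<Sum>j\<in>(\<lambda>k. (i,k)) ` {k. (i,k) \<in> J}. mu j * xi $ j) = (\<Sum>k\<in>{k. (i,k) \<in> J}. mu (i,k) * xi $ (i,k))"
    by (subst sum.reindex) (auto simp: inj_on_def)
  finally show ?thesis unfolding R_mult_def by simp
qed

lemma G_inner: "G_mult J xi k = rowG J k \<bullet> xi"
proof -
  have "rowG J k \<bullet> xi = (\<Sum>j\<in>UNIV. if j \<in> J \<and> snd j = k then xi $ j else 0)"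
    unfolding rowG_def inner_vec_def by (rule sum.cong) auto
  also have "\<dots> = (\<Sum>j\<in>{j. j \<in> J \<and> snd j = k}. xi $ j)"
    by (simp add: sum.inter_filter[symmetric])
  also have "{j. j \<in> J \<and> snd j = k} = (\<lambda>i. (i,k)) ` {i. (i,k) \<in> J}" by force
  also have "(\<Sum>j\<in>(\<lambda>i. (i,k)) ` {i. (i,k) \<in> J}. xi $ j) = (\<Sum>i\<in>{i. (i,k) \<in> J}. xi $ (i,k))"
    by (subst sum.reindex) (auto simp: inj_on_def)
  finally show ?thesis unfolding G_mult_def by simp
qed

lemma sumR: "(\<Sum>i\<in>UNIV. y $ i * R_mult J mu xi i) = (\<Sum>j\<in>UNIV. if j \<in> J then y $ (fst j) * mu j * xi $ j else 0)"
proof -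
  have "(\<Sum>i\<in>UNIV. y $ i * R_mult J mu xi i) = (\<Sum>i\<in>UNIV. \<Sum>j\<in>UNIV. if j \<in> J \<and> fst j = i then y $ i * mu j * xi $ j else 0)"
    unfolding R_inner rowR_def inner_vec_def sum_distrib_left
    by (intro sum.cong refl) auto
  also have "\<dots> = (\<Sum>j\<in>UNIV. \<Sum>i\<in>UNIV. if j \<in> J \<and> fst j = i then y $ i * mu j * xi $ j else 0)"
    by (rule sum.swap)
  also have "\<dots> = (\<Sum>j\<in>UNIV. if j \<in> J then y $ (fst j) * mu j * xi $ j else 0)"
    by (intro sum.cong refl) (auto simp: if_distrib sum.delta cong: if_cong)
  finally show ?thesis .
qed

lemma sumG: "(\<Sum>k\<in>UNIV. z $ k * G_mult J xi k) = (\<Sum>j\<in>UNIV. if j \<in> J then z $ (snd j) * xi $ j else 0)"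
proof -
  have "(\<Sum>k\<in>UNIV. z $ k * G_mult J xi k) = (\<Sum>k\<in>UNIV. \<Sum>j\<in>UNIV. if j \<in> J \<and> snd j = k then z $ k * xi $ j else 0)"
    unfolding G_inner rowG_def inner_vec_def sum_distrib_left
    by (intro sum.cong refl) auto
  also have "\<dots> = (\<Sum>j\<in>UNIV. \<Sum>k\<in>UNIV. if j \<in> J \<and> snd j = k then z $ k * xi $ j else 0)"
    by (rule sum.swap)
  also have "\<dots> = (\<Sum>j\<in>UNIV. if j \<in> J then z $ (snd j) * xi $ j else 0)"
    by (intro sum.cong refl) (auto simp: if_distrib sum.delta cong: if_cong)
  finally show ?thesis .
qed


lemma slack_identity:
  "(\<Sum>k\<in>UNIV. z $ k * G_mult J xi k) - (\<Sum>i\<in>UNIV. y $ i * R_mult J mu xi i)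
   = (\<Sum>j\<in>UNIV. if j \<in> J then (z $ (snd j) - y $ (fst j) * mu j) * xi $ j else 0)"
  unfolding sumR sumG sum_subtractf[symmetric]
  by (intro sum.cong refl) (auto simp: algebra_simps)

lemma weak_duality:
  assumes "dual_feasible J mu y z" "lp_feasible J mu lam xi rho"
  shows "dual_obj lam y \<le> rho"
proof -
  have zs: "(\<Sum>k\<in>UNIV. z $ k) = 1" and yz: "\<forall>i k. (i,k) \<in> J \<longrightarrow> y $ i * mu (i,k) \<le> z $ k"
    and z0: "\<forall>k. 0 \<le> z $ k" using assms(1) unfolding dual_feasible_def by auto
  have R: "\<forall>i. R_mult J mu xi i = lam i" and G: "\<forall>k. G_mult J xi k \<le> rho"
    and x0: "\<forall>j. 0 \<le> xi $ j" using assms(2) unfolding lp_feasible_def by auto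
  have "dual_obj lam y = (\<Sum>i\<in>UNIV. y $ i * R_mult J mu xi i)"
    unfolding dual_obj_def using R by simp
  also have "\<dots> \<le> (\<Sum>k\<in>UNIV. z $ k * G_mult J xi k)"
  proof -
    have "0 \<le> (\<Sum>j\<in>UNIV. if j \<in> J then (z $ (snd j) - y $ (fst j) * mu j) * xi $ j else 0)"
    proof (rule sum_nonneg)
      fix j :: "'a \<times> 'b" show "0 \<le> (if j \<in> J then (z $ (snd j) - y $ (fst j) * mu j) * xi $ j else 0)"
        using yz x0 by (cases j) (auto intro!: mult_nonneg_nonneg)
    qed
    then show ?thesis using slack_identity[of z J xi y mu] by simp
  qed
  also have "\<dots> \<le> (\<Sum>k\<in>UNIV. z $ k * rho)"
    by (rule sum_mono) (simp add: G z0 mult_left_mono)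
  also have "\<dots> = rho" using zs by (simp add: sum_distrib_right[symmetric])
  finally show ?thesis .
qed

lemma S_LP_iff:
  assumes "\<exists>xi. lp_optimal J mu lam xi 1"
  shows "xi \<in> S_LP J mu lam \<longleftrightarrow> lp_feasible J mu lam xi 1"
  using assms unfolding S_LP_def lp_optimal_def by auto


lemma axis_inner1: "axis i (1::real) \<bullet> x = x $ i"
  by (simp add: inner_commute inner_axis)

lemma dual_dir:
  fixes J :: "('i::finite \<times> 'k::finite) set" and mu :: "'i \<times> 'k \<Rightarrow> real" and lam :: "'i \<Rightarrow> real"
    and i0 :: 'i and k0 :: 'k and m :: real
  assumes noprim: "\<not> (\<exists>(xi::real^('i \<times> 'k)) t s. (\<forall>j. 0 \<le> xi $ j) \<and> (\<forall>j. j \<notin> J \<longrightarrow> xi $ j = 0) \<and> 0 \<le> t \<and>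
      (\<forall>k. 0 \<le> s k) \<and> (\<forall>i. R_mult J mu xi i + (if i = i0 then m else 0) = t * lam i) \<and>
      (\<forall>k. G_mult J xi k + s k + (if k = k0 then 1 else 0) = t))"
  shows "\<exists>(y::real^'i) (z::real^'k). (\<forall>i k. (i,k) \<in> J \<longrightarrow> y $ i * mu (i,k) \<le> z $ k) \<and> (\<forall>k. 0 \<le> z $ k) \<and>
      (\<Sum>k\<in>UNIV. z $ k) \<le> dual_obj lam y \<and> m * y $ i0 < z $ k0"
proof (rule ccontr)
  assume nc: "\<not> ?thesis"
  define f :: "('i \<times> 'k) + ('k + unit) \<Rightarrow> (real^'i) \<times> (real^'k)" where
    "f = (\<lambda>r. case r of Inl j \<Rightarrow> (if j \<in> J then (mu j *\<^sub>R axis (fst j) 1, - axis (snd j) 1) else 0)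
                 | Inr (Inl k) \<Rightarrow> (0, - axis k 1)
                 | Inr (Inr u) \<Rightarrow> (- (\<chi> i. lam i), (\<chi> k. 1)))"
  define b :: "(real^'i) \<times> (real^'k)" where "b = (- (m *\<^sub>R axis i0 1), axis k0 1)"
  have nosep: "\<not> (\<exists>a. (\<forall>r\<in>UNIV. a \<bullet> f r \<le> 0) \<and> 0 < a \<bullet> b)"
  proof
    assume "\<exists>a. (\<forall>r\<in>UNIV. a \<bullet> f r \<le> 0) \<and> 0 < a \<bullet> b"
    then obtain y z where A: "\<forall>r. (y,z) \<bullet> f r \<le> 0" and B: "0 < (y,z) \<bullet> b" by auto
    have 1: "\<forall>i k. (i,k) \<in> J \<longrightarrow> y $ i * mu (i,k) \<le> z $ k"
    proof (intro allI impI)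
      fix i k assume "(i,k) \<in> J"
      then show "y $ i * mu (i,k) \<le> z $ k" using A[rule_format, of "Inl (i,k)"]
        by (simp add: f_def inner_Pair inner_axis algebra_simps)
    qed
    have 2: "\<forall>k. 0 \<le> z $ k"
      using A by (auto simp: f_def inner_Pair inner_axis dest: spec[of _ "Inr (Inl _)"])
    have 3: "(\<Sum>k\<in>UNIV. z $ k) \<le> dual_obj lam y"
      using A[rule_format, of "Inr (Inr ())"]
      by (simp add: f_def inner_Pair inner_vec_def dual_obj_def sum_negf)
    have 4: "m * y $ i0 < z $ k0" using B by (simp add: b_def inner_Pair inner_axis)
    show False using nc 1 2 3 4 by blast
  qed
  obtain c where c0: "\<forall>r\<in>UNIV. 0 \<le> c r" and bc: "b = (\<Sum>r\<in>UNIV. c r *\<^sub>R f r)"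
    using farkas_idx[OF finite nosep] by blast
  define xi :: "real^('i \<times> 'k)" where "xi = (\<chi> j. if j \<in> J then c (Inl j) else 0)"
  define t where "t = c (Inr (Inr ()))"
  define s where "s = (\<lambda>k. c (Inr (Inl k)))"
  have eqR: "R_mult J mu xi i + (if i = i0 then m else 0) = t * lam i" for i
  proof -
    have "(axis i 1, 0) \<bullet> b = (axis i 1, 0) \<bullet> (\<Sum>r\<in>UNIV. c r *\<^sub>R f r)" using bc by simp
    also have "\<dots> = (\<Sum>r\<in>UNIV. c r * ((axis i 1, 0) \<bullet> f r))"
      by (simp add: inner_sum_right)
    also have "\<dots> = (\<Sum>j\<in>UNIV. c (Inl j) * ((axis i 1, 0) \<bullet> f (Inl j)))
        + ((\<Sum>k\<in>UNIV. c (Inr (Inl k)) * ((axis i 1, 0) \<bullet> f (Inr (Inl k))))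
        + c (Inr (Inr ())) * ((axis i 1, 0) \<bullet> f (Inr (Inr ()))))"
      by (simp add: sum_UNIV_Plus UNIV_unit)
    also have "\<dots> = R_mult J mu xi i - t * lam i"
    proof -
      have "(\<Sum>j\<in>UNIV. c (Inl j) * ((axis i 1, 0) \<bullet> f (Inl j))) = rowR J mu i \<bullet> xi"
        unfolding rowR_def xi_def inner_vec_def
        by (intro sum.cong refl) (auto simp: f_def inner_Pair inner_axis_axis)
      then show ?thesis
        by (simp add: R_inner f_def inner_Pair axis_inner1 t_def)
    qed
    finally show ?thesis by (cases "i = i0") (auto simp: b_def inner_Pair inner_axis_axis inner_real_def algebra_simps)
  qed
  have eqG: "G_mult J xi k + s k + (if k = k0 then 1 else 0) = t" for k
  proof -
    have "(0, axis k 1) \<bullet> b = (0, axis k 1) \<bullet> (\<Sum>r\<in>UNIV. c r *\<^sub>R f r)" using bc by simp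
    also have "\<dots> = (\<Sum>r\<in>UNIV. c r * ((0, axis k 1) \<bullet> f r))"
      by (simp add: inner_sum_right)
    also have "\<dots> = (\<Sum>j\<in>UNIV. c (Inl j) * ((0, axis k 1) \<bullet> f (Inl j)))
        + ((\<Sum>k'\<in>UNIV. c (Inr (Inl k')) * ((0, axis k 1) \<bullet> f (Inr (Inl k'))))
        + c (Inr (Inr ())) * ((0, axis k 1) \<bullet> f (Inr (Inr ()))))"
      by (simp add: sum_UNIV_Plus UNIV_unit)
    also have "\<dots> = - G_mult J xi k - s k + t"
    proof -
      have "(\<Sum>j\<in>UNIV. c (Inl j) * ((0, axis k 1) \<bullet> f (Inl j))) = - (rowG J k \<bullet> xi)"
        unfolding rowG_def xi_def inner_vec_def sum_negf[symmetric]
        by (intro sum.cong refl) (auto simp: f_def inner_Pair inner_axis_axis)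
      moreover have "(\<Sum>k'\<in>UNIV. c (Inr (Inl k')) * ((0, axis k 1) \<bullet> f (Inr (Inl k')))) = - s k"
        (is "?L = _")
      proof -
        have "?L = (\<Sum>k'\<in>UNIV. if k' = k then - s k' else 0)"
          by (intro sum.cong refl) (auto simp: f_def inner_Pair inner_axis_axis s_def inner_real_def)
        then show ?thesis by simp
      qed
      ultimately show ?thesis
        by (simp add: G_inner f_def inner_Pair axis_inner1 t_def)
    qed
    finally show ?thesis by (cases "k = k0") (auto simp: b_def inner_Pair inner_axis_axis inner_real_def algebra_simps)
  qed
  have "\<forall>j. 0 \<le> xi $ j" using c0 by (simp add: xi_def)
  moreover have "\<forall>j. j \<notin> J \<longrightarrow> xi $ j = 0" by (simp add: xi_def)
  moreover have "0 \<le> t" using c0 by (simp add: t_def)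
  moreover have "\<forall>k. 0 \<le> s k" using c0 by (simp add: s_def)
  ultimately show False using noprim eqR eqG by blast
qed



lemma G_nonneg: "(\<forall>j. 0 \<le> xi $ j) \<Longrightarrow> 0 \<le> G_mult J xi k"
  unfolding G_mult_def by (auto intro: sum_nonneg)

lemma R_nonneg: "(\<forall>j\<in>J. 0 < mu j) \<Longrightarrow> (\<forall>j. 0 \<le> xi $ j) \<Longrightarrow> 0 \<le> R_mult J mu xi i"
  unfolding R_mult_def by (rule sum_nonneg) (auto intro!: mult_nonneg_nonneg simp: less_imp_le)

lemma R_scale: "R_mult J mu (c *\<^sub>R xi) i = c * R_mult J mu xi i"
  unfolding R_inner by simp

lemma G_scale: "G_mult J (c *\<^sub>R xi) k = c * G_mult J xi k"
  unfolding G_inner by simp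

lemma R_add_axis: "(i0,k0) \<in> J \<Longrightarrow> R_mult J mu (xi + axis (i0,k0) 1) i = R_mult J mu xi i + (if i = i0 then mu (i0,k0) else 0)"
  unfolding R_inner by (simp add: inner_add_right inner_axis rowR_def)

lemma G_add_axis: "(i0,k0) \<in> J \<Longrightarrow> G_mult J (xi + axis (i0,k0) 1) k = G_mult J xi k + (if k = k0 then 1 else 0)"
  unfolding G_inner by (simp add: inner_add_right inner_axis rowG_def)

lemma S_LP_polytope:
  fixes J :: "('i::finite \<times> 'k::finite) set"
  assumes opt_val: "\<exists>xi. lp_optimal J mu lam xi 1"
  shows "\<exists>E. finite E \<and> (\<forall>e\<in>E. e extreme_point_of S_LP J mu lam) \<and> S_LP J mu lam = convex hull E"
proof -
  let ?S = "S_LP J mu lam"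
  have Siff: "xi \<in> ?S \<longleftrightarrow> lp_feasible J mu lam xi 1" for xi using S_LP_iff[OF opt_val] .
  define A1 where "A1 = (\<lambda>i. {xi::real^('i\<times>'k). rowR J mu i \<bullet> xi = lam i})"
  define A2 where "A2 = (\<lambda>k. {xi::real^('i\<times>'k). rowG J k \<bullet> xi \<le> 1})"
  define A3 where "A3 = (\<lambda>j. {xi::real^('i\<times>'k). axis j 1 \<bullet> xi \<ge> 0})"
  define A4 where "A4 = (\<lambda>j. {xi::real^('i\<times>'k). j \<notin> J \<longrightarrow> xi $ j = 0})"
  have Seq: "?S = (\<Inter>i. A1 i) \<inter> (\<Inter>k. A2 k) \<inter> (\<Inter>j. A3 j) \<inter> (\<Inter>j. A4 j)"
    by (auto simp: Siff lp_feasible_def A1_def A2_def A3_def A4_def R_inner G_inner axis_inner1 split: if_splits)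
  have "polyhedron (\<Inter>i. A1 i)"
    by (rule polyhedron_Inter) (auto simp: A1_def polyhedron_hyperplane)
  moreover have "polyhedron (\<Inter>k. A2 k)"
    by (rule polyhedron_Inter) (auto simp: A2_def polyhedron_halfspace_le)
  moreover have "polyhedron (\<Inter>j. A3 j)"
    by (rule polyhedron_Inter) (auto simp: A3_def polyhedron_halfspace_ge)
  moreover have "polyhedron (\<Inter>j. A4 j)"
  proof (rule polyhedron_Inter)
    fix X assume "X \<in> range A4"
    then obtain j where X: "X = A4 j" by auto
    show "polyhedron X"
    proof (cases "j \<in> J")
      case True then show ?thesis by (simp add: X A4_def)
    next
      case False
      then have "X = {xi. axis j 1 \<bullet> xi = 0}" by (simp add: X A4_def axis_inner1)
      then show ?thesis by (simp add: polyhedron_hyperplane)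
    qed
  qed simp
  ultimately have P: "polyhedron ?S" unfolding Seq by auto
  have bnd: "bounded ?S"
    unfolding bounded_iff
  proof (intro exI ballI)
    fix xi assume "xi \<in> ?S"
    then have F: "lp_feasible J mu lam xi 1" by (simp add: Siff)
    have c: "\<bar>xi $ j\<bar> \<le> 1" for j
    proof (cases "j \<in> J")
      case True
      obtain i k where j: "j = (i,k)" by (cases j)
      have "xi $ (i,k) \<le> G_mult J xi k"
        unfolding G_mult_def using F True j
        by (intro member_le_sum) (auto simp: lp_feasible_def)
      also have "\<dots> \<le> 1" using F by (auto simp: lp_feasible_def)
      finally show ?thesis using F j by (auto simp: lp_feasible_def)
    next
      case False
      have "xi $ j = 0" using F False unfolding lp_feasible_def by blast
      then show ?thesis by simp
    qed
    have "norm xi \<le> (\<Sum>j\<in>UNIV. \<bar>xi $ j\<bar>)" by (rule norm_le_l1_cart)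
    also have "\<dots> \<le> (\<Sum>j\<in>(UNIV::('i\<times>'k) set). 1)" by (rule sum_mono) (rule c)
    finally show "norm xi \<le> real CARD('i \<times> 'k)" by simp
  qed
  have cpt: "compact ?S" using bnd polyhedron_imp_closed[OF P] by (simp add: compact_eq_bounded_closed)
  have cvx: "convex ?S" using polyhedron_imp_convex[OF P] .
  show ?thesis
    by (rule exI[of _ "{x. x extreme_point_of ?S}"])
       (use Krein_Milman_Minkowski[OF cpt cvx] finite_polyhedron_extreme_points[OF P] in auto)
qed


theorem lemma2p3:
  fixes J :: "('i::finite \<times> 'k::finite) set"
    and mu :: "'i \<times> 'k \<Rightarrow> real" and lam :: "'i \<Rightarrow> real"
    and ys :: "real^'i" and zs :: "real^'k"
  assumes lam_pos: "\<forall>i. 0 < lam i"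
    and mu_pos: "\<forall>j\<in>J. 0 < mu j"
    and opt_val: "\<exists>xi. lp_optimal J mu lam xi 1"
    and full_load: "\<forall>xi\<in>S_LP J mu lam. \<forall>k. G_mult J xi k = 1"
    and dual_opt: "dual_optimal J mu lam ys zs"
    and dual_unique: "\<forall>y z. dual_optimal J mu lam y z \<longrightarrow> y = ys \<and> z = zs"
  shows "(\<exists>E. finite E \<and> (\<forall>e\<in>E. e extreme_point_of S_LP J mu lam) \<and>
              S_LP J mu lam = convex hull E)
    \<and> dual_obj lam ys = 1
    \<and> (\<forall>k. 0 < zs $ k)
    \<and> (\<forall>i k. potentially_basic J mu lam (i,k) \<longrightarrow> ys $ i * mu (i,k) = zs $ k)
    \<and> (\<forall>i k. always_nonbasic J mu lam (i,k) \<longrightarrow> ys $ i * mu (i,k) < zs $ k)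
    \<and> (\<forall>i. \<exists>k. potentially_basic J mu lam (i,k))
    \<and> (\<forall>i. 0 < ys $ i)"
proof -
  let ?S = "S_LP J mu lam"
  have Siff: "xi \<in> ?S \<longleftrightarrow> lp_feasible J mu lam xi 1" for xi using S_LP_iff[OF opt_val] .
  obtain xi0 where xi0: "lp_optimal J mu lam xi0 1" using opt_val by blast
  have xi0f: "lp_feasible J mu lam xi0 1" using xi0 by (simp add: lp_optimal_def)
  have dfeas: "dual_feasible J mu ys zs"
    and dmax: "\<And>y' z'. dual_feasible J mu y' z' \<Longrightarrow> dual_obj lam y' \<le> dual_obj lam ys"
    using dual_opt by (auto simp: dual_optimal_def)
  have obj_le: "dual_obj lam ys \<le> 1" using weak_duality[OF dfeas xi0f] .
  have zs_sum: "(\<Sum>k\<in>UNIV. zs $ k) = 1" and zs0: "\<forall>k. 0 \<le> zs $ k"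
    and yzs: "\<forall>i k. (i,k) \<in> J \<longrightarrow> ys $ i * mu (i,k) \<le> zs $ k"
    using dfeas by (auto simp: dual_feasible_def)

  have noprimK: "\<not> (\<exists>(xi::real^('i \<times> 'k)) t s. (\<forall>j. 0 \<le> xi $ j) \<and> (\<forall>j. j \<notin> J \<longrightarrow> xi $ j = 0) \<and> 0 \<le> t \<and>
      (\<forall>k. 0 \<le> s k) \<and> (\<forall>i. R_mult J mu xi i + (if i = i0 then 0 else 0) = t * lam i) \<and>
      (\<forall>k. G_mult J xi k + s k + (if k = k0 then 1 else 0) = t))" for i0 :: 'i and k0 :: 'k
  proof
    assume "\<exists>(xi::real^('i \<times> 'k)) t s. (\<forall>j. 0 \<le> xi $ j) \<and> (\<forall>j. j \<notin> J \<longrightarrow> xi $ j = 0) \<and> 0 \<le> t \<and>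
      (\<forall>k. 0 \<le> s k) \<and> (\<forall>i. R_mult J mu xi i + (if i = i0 then 0 else 0) = t * lam i) \<and>
      (\<forall>k. G_mult J xi k + s k + (if k = k0 then 1 else 0) = t)"
    then obtain xi :: "real^('i \<times> 'k)" and t s where x0: "\<forall>j. 0 \<le> xi $ j" and xJ: "\<forall>j. j \<notin> J \<longrightarrow> xi $ j = 0"
      and t0: "0 \<le> t" and s0: "\<forall>k. 0 \<le> s k" and eR: "\<forall>i. R_mult J mu xi i = t * lam i"
      and eG: "\<forall>k. G_mult J xi k + s k + (if k = k0 then 1 else 0) = t" by auto
    have G0: "0 \<le> G_mult J xi k0" using G_nonneg[OF x0] .
    have eGk: "G_mult J xi k0 + s k0 + 1 = t" using eG by (metis)
    then have tpos: "0 < t" using G0 s0 by (smt (verit))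
    define xi' where "xi' = (1 / t) *\<^sub>R xi"
    have "lp_feasible J mu lam xi' 1"
      unfolding lp_feasible_def
    proof (intro conjI allI impI)
      fix i show "R_mult J mu xi' i = lam i" using eR tpos by (simp add: xi'_def R_scale)
    next
      fix k show "G_mult J xi' k \<le> 1"
      proof -
        have "G_mult J xi k \<le> t" using eG[rule_format, of k] s0 by (smt (verit))
        then show ?thesis using tpos by (simp add: xi'_def G_scale)
      qed
    next
      fix j show "0 \<le> xi' $ j" using x0[rule_format, of j] tpos by (simp add: xi'_def)
    next
      fix j assume "j \<notin> J" then show "xi' $ j = 0" using xJ[rule_format, of j] by (simp add: xi'_def)
    qed
    then have "xi' \<in> ?S" by (simp add: Siff)
    then have "G_mult J xi' k0 = 1" using full_load by blast
    then have "G_mult J xi k0 = t" using tpos by (simp add: xi'_def G_scale)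
    then show False using eGk s0 by (smt (verit))
  qed

  have key: "ys = (1 / (1 + (\<Sum>k\<in>UNIV. z $ k))) *\<^sub>R (ys + y) \<and> zs = (1 / (1 + (\<Sum>k\<in>UNIV. z $ k))) *\<^sub>R (zs + z)"
    if yz: "\<forall>i k. (i,k) \<in> J \<longrightarrow> y $ i * mu (i,k) \<le> z $ k" and z0: "\<forall>k. 0 \<le> z $ k"
      and zl: "(\<Sum>k\<in>UNIV. z $ k) \<le> dual_obj lam y" and o1: "dual_obj lam ys = 1"
    for y :: "real^'i" and z :: "real^'k"
  proof -
    define \<sigma> where "\<sigma> = (\<Sum>k\<in>UNIV. z $ k)"
    have s0: "0 \<le> \<sigma>" unfolding \<sigma>_def using z0 by (simp add: sum_nonneg)
    define c where "c = 1 / (1 + \<sigma>)"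
    have c0: "0 < c" unfolding c_def using s0 by simp
    define y' where "y' = c *\<^sub>R (ys + y)"
    define z' where "z' = c *\<^sub>R (zs + z)"
    have "dual_feasible J mu y' z'"
      unfolding dual_feasible_def
    proof (intro conjI allI impI)
      show "(\<Sum>k\<in>UNIV. z' $ k) = 1"
      proof -
        have "(\<Sum>k\<in>UNIV. z' $ k) = (\<Sum>k\<in>UNIV. zs $ k + z $ k) / (1 + \<sigma>)"
          by (simp add: z'_def c_def sum_divide_distrib)
        also have "\<dots> = 1" using s0 zs_sum by (simp add: sum.distrib \<sigma>_def[symmetric])
        finally show ?thesis .
      qed
    next
      fix i k assume "(i,k) \<in> J"
      then have "(ys $ i + y $ i) * mu (i,k) \<le> zs $ k + z $ k"
        using yzs yz by (simp add: distrib_right add_mono)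
      then show "y' $ i * mu (i,k) \<le> z' $ k"
        using c0 by (simp add: y'_def z'_def mult.assoc mult_left_mono)
    next
      fix k show "0 \<le> z' $ k" using c0 zs0 z0 by (simp add: z'_def)
    qed
    moreover have "dual_obj lam y' = c * (dual_obj lam ys + dual_obj lam y)"
      by (simp add: y'_def dual_obj_def sum_distrib_left sum.distrib algebra_simps)
    moreover have "c * (dual_obj lam ys + dual_obj lam y) \<ge> 1"
    proof -
      have "1 + \<sigma> \<le> dual_obj lam ys + dual_obj lam y" using o1 zl \<sigma>_def by simp
      then show ?thesis using s0 by (simp add: c_def field_simps)
    qed
    ultimately have "dual_optimal J mu lam y' z'"
      unfolding dual_optimal_def using weak_duality[OF _ xi0f] by (smt (verit))
    then have "y' = ys \<and> z' = zs" using dual_unique by blast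
    then show ?thesis by (simp add: y'_def z'_def c_def \<sigma>_def)
  qed

  have obj1: "dual_obj lam ys = 1"
  proof -
    obtain y :: "real^'i" and z :: "real^'k" where yz: "\<forall>i k. (i,k) \<in> J \<longrightarrow> y $ i * mu (i,k) \<le> z $ k"
      and z0: "\<forall>k. 0 \<le> z $ k" and zl: "(\<Sum>k\<in>UNIV. z $ k) \<le> dual_obj lam y"
      and zk: "0 * y $ undefined < z $ undefined"
      using dual_dir[OF noprimK[of undefined undefined]] by blast
    define \<sigma> where "\<sigma> = (\<Sum>k\<in>UNIV. z $ k)"
    have "z $ undefined \<le> \<sigma>" unfolding \<sigma>_def using z0 by (intro member_le_sum) auto
    then have sp: "0 < \<sigma>" using zk by simp
    have "dual_feasible J mu ((1/\<sigma>) *\<^sub>R y) ((1/\<sigma>) *\<^sub>R z)"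
      unfolding dual_feasible_def
    proof (intro conjI allI impI)
      show "(\<Sum>k\<in>UNIV. ((1/\<sigma>) *\<^sub>R z) $ k) = 1"
        using sp by (simp add: sum_divide_distrib[symmetric] \<sigma>_def[symmetric])
    next
      fix i k assume "(i,k) \<in> J"
      then have "y $ i * mu (i,k) \<le> z $ k" using yz by blast
      then show "((1/\<sigma>) *\<^sub>R y) $ i * mu (i,k) \<le> ((1/\<sigma>) *\<^sub>R z) $ k"
        using sp by (simp add: mult.assoc divide_right_mono)
    next
      fix k show "0 \<le> ((1/\<sigma>) *\<^sub>R z) $ k" using sp z0 by simp
    qed
    then have "dual_obj lam ((1/\<sigma>) *\<^sub>R y) \<le> dual_obj lam ys" by (rule dmax)
    moreover have "dual_obj lam ((1/\<sigma>) *\<^sub>R y) = dual_obj lam y / \<sigma>"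
      by (simp add: dual_obj_def sum_divide_distrib)
    moreover have "1 \<le> dual_obj lam y / \<sigma>" using sp zl \<sigma>_def by simp
    ultimately show ?thesis using obj_le by simp
  qed

  have zpos: "\<forall>k. 0 < zs $ k"
  proof
    fix k0 :: 'k
    obtain y :: "real^'i" and z :: "real^'k" where yz: "\<forall>i k. (i,k) \<in> J \<longrightarrow> y $ i * mu (i,k) \<le> z $ k"
      and z0: "\<forall>k. 0 \<le> z $ k" and zl: "(\<Sum>k\<in>UNIV. z $ k) \<le> dual_obj lam y"
      and zk: "0 * y $ undefined < z $ k0"
      using dual_dir[OF noprimK[of undefined k0]] by blast
    define \<sigma> where "\<sigma> = (\<Sum>k\<in>UNIV. z $ k)"
    have s0: "0 \<le> \<sigma>" unfolding \<sigma>_def using z0 by (simp add: sum_nonneg)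
    have "zs = (1 / (1 + \<sigma>)) *\<^sub>R (zs + z)" using key[OF yz z0 zl obj1] \<sigma>_def by blast
    from arg_cong[where f="\<lambda>v. v $ k0", OF this]
    have "zs $ k0 = (zs $ k0 + z $ k0) / (1 + \<sigma>)" by (simp only: vector_scaleR_component vector_add_component) simp
    then have "zs $ k0 * (1 + \<sigma>) = zs $ k0 + z $ k0" using s0 by (simp add: field_simps)
    then have "zs $ k0 * \<sigma> = z $ k0" by (simp add: algebra_simps)
    then show "0 < zs $ k0" using zk s0 zs0
      by (smt (verit) mult_nonneg_nonneg zero_less_mult_iff)
  qed

  have pb: "\<forall>i k. potentially_basic J mu lam (i,k) \<longrightarrow> ys $ i * mu (i,k) = zs $ k"
  proof (intro allI impI)
    fix i k assume "potentially_basic J mu lam (i,k)"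
    then obtain xi where ikJ: "(i,k) \<in> J" and xS: "xi \<in> ?S" and xp: "0 < xi $ (i,k)"
      unfolding potentially_basic_def by blast
    have F: "lp_feasible J mu lam xi 1" using xS by (simp add: Siff)
    have Gx: "\<forall>k. G_mult J xi k = 1" using full_load xS by blast
    have Rx: "\<forall>i. R_mult J mu xi i = lam i" and x0: "\<forall>j. 0 \<le> xi $ j" using F by (auto simp: lp_feasible_def)
    have "(\<Sum>j\<in>UNIV. if j \<in> J then (zs $ (snd j) - ys $ (fst j) * mu j) * xi $ j else 0)
        = (\<Sum>k\<in>UNIV. zs $ k * G_mult J xi k) - (\<Sum>i\<in>UNIV. ys $ i * R_mult J mu xi i)"
      by (rule slack_identity[symmetric])
    also have "\<dots> = 0" using Gx Rx zs_sum obj1 by (simp add: dual_obj_def)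
    finally have sum0: "(\<Sum>j\<in>UNIV. if j \<in> J then (zs $ (snd j) - ys $ (fst j) * mu j) * xi $ j else 0) = 0" .
    have nn: "\<forall>j\<in>UNIV. 0 \<le> (if j \<in> J then (zs $ (snd j) - ys $ (fst j) * mu j) * xi $ j else 0)"
    proof
      fix j :: "'i \<times> 'k"
      show "0 \<le> (if j \<in> J then (zs $ (snd j) - ys $ (fst j) * mu j) * xi $ j else 0)"
        using yzs x0 by (cases j) (auto intro!: mult_nonneg_nonneg)
    qed
    have allz: "\<forall>j\<in>UNIV. (if j \<in> J then (zs $ (snd j) - ys $ (fst j) * mu j) * xi $ j else 0) = 0"
      by (rule iffD1[OF sum_nonneg_eq_0_iff[OF finite nn[rule_format]] sum0])
    have "(zs $ k - ys $ i * mu (i,k)) * xi $ (i,k) = 0"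
      using allz[rule_format, of "(i,k)"] ikJ by simp
    then show "ys $ i * mu (i,k) = zs $ k" using xp by simp
  qed

  have an: "\<forall>i k. always_nonbasic J mu lam (i,k) \<longrightarrow> ys $ i * mu (i,k) < zs $ k"
  proof (intro allI impI)
    fix i0 k0 assume anb: "always_nonbasic J mu lam (i0,k0)"
    then have j0J: "(i0,k0) \<in> J" and npb: "\<not> potentially_basic J mu lam (i0,k0)"
      unfolding always_nonbasic_def by auto
    have mpos: "0 < mu (i0,k0)" using mu_pos j0J by blast
    have noprim: "\<not> (\<exists>(xi::real^('i \<times> 'k)) t s. (\<forall>j. 0 \<le> xi $ j) \<and> (\<forall>j. j \<notin> J \<longrightarrow> xi $ j = 0) \<and> 0 \<le> t \<and>
      (\<forall>k. 0 \<le> s k) \<and> (\<forall>i. R_mult J mu xi i + (if i = i0 then mu (i0,k0) else 0) = t * lam i) \<and>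
      (\<forall>k. G_mult J xi k + s k + (if k = k0 then 1 else 0) = t))"
    proof
      assume "\<exists>(xi::real^('i \<times> 'k)) t s. (\<forall>j. 0 \<le> xi $ j) \<and> (\<forall>j. j \<notin> J \<longrightarrow> xi $ j = 0) \<and> 0 \<le> t \<and>
        (\<forall>k. 0 \<le> s k) \<and> (\<forall>i. R_mult J mu xi i + (if i = i0 then mu (i0,k0) else 0) = t * lam i) \<and>
        (\<forall>k. G_mult J xi k + s k + (if k = k0 then 1 else 0) = t)"
      then obtain xi :: "real^('i \<times> 'k)" and t s where x0: "\<forall>j. 0 \<le> xi $ j" and xJ: "\<forall>j. j \<notin> J \<longrightarrow> xi $ j = 0"
        and t0: "0 \<le> t" and s0: "\<forall>k. 0 \<le> s k"
        and eR: "\<forall>i. R_mult J mu xi i + (if i = i0 then mu (i0,k0) else 0) = t * lam i"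
        and eG: "\<forall>k. G_mult J xi k + s k + (if k = k0 then 1 else 0) = t" by auto
      have R0: "0 \<le> R_mult J mu xi i0" using R_nonneg[OF mu_pos x0] .
      have "R_mult J mu xi i0 + mu (i0,k0) = t * lam i0" using eR by (metis)
      then have tpos: "0 < t" using R0 mpos lam_pos
        by (smt (verit) mult_nonpos_nonneg mult_le_0_iff)
      define xi' where "xi' = (1 / t) *\<^sub>R (xi + axis (i0,k0) 1)"
      have "lp_feasible J mu lam xi' 1"
        unfolding lp_feasible_def
      proof (intro conjI allI impI)
        fix i show "R_mult J mu xi' i = lam i"
          using eR[rule_format, of i] tpos by (simp add: xi'_def R_scale R_add_axis[OF j0J])
      next
        fix k show "G_mult J xi' k \<le> 1"
        proof -
          have "G_mult J xi k + (if k = k0 then 1 else 0) \<le> t" using eG[rule_format, of k] s0 by (smt (verit))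
          then show ?thesis using tpos by (simp add: xi'_def G_scale G_add_axis[OF j0J])
        qed
      next
        fix j show "0 \<le> xi' $ j" using x0[rule_format, of j] tpos by (simp add: xi'_def axis_def)
      next
        fix j assume "j \<notin> J" then show "xi' $ j = 0" using xJ[rule_format, of j] j0J by (auto simp add: xi'_def axis_def)
      qed
      then have "xi' \<in> ?S" by (simp add: Siff)
      moreover have "0 < xi' $ (i0,k0)" using x0[rule_format, of "(i0,k0)"] tpos by (simp add: xi'_def)
      ultimately have "potentially_basic J mu lam (i0,k0)" using j0J unfolding potentially_basic_def by blast
      then show False using npb by blast
    qed
    obtain y :: "real^'i" and z :: "real^'k" where yz: "\<forall>i k. (i,k) \<in> J \<longrightarrow> y $ i * mu (i,k) \<le> z $ k"
      and z0: "\<forall>k. 0 \<le> z $ k" and zl: "(\<Sum>k\<in>UNIV. z $ k) \<le> dual_obj lam y"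
      and zk: "mu (i0,k0) * y $ i0 < z $ k0"
      using dual_dir[OF noprim] by blast
    define \<sigma> where "\<sigma> = (\<Sum>k\<in>UNIV. z $ k)"
    have s0: "0 \<le> \<sigma>" unfolding \<sigma>_def using z0 by (simp add: sum_nonneg)
    have K: "ys = (1 / (1 + \<sigma>)) *\<^sub>R (ys + y) \<and> zs = (1 / (1 + \<sigma>)) *\<^sub>R (zs + z)"
      using key[OF yz z0 zl obj1] \<sigma>_def by blast
    from arg_cong[where f="\<lambda>v. v $ k0", OF conjunct2[OF K]]
    have "zs $ k0 = (zs $ k0 + z $ k0) / (1 + \<sigma>)" by (simp only: vector_scaleR_component vector_add_component) simp
    then have e1: "zs $ k0 * \<sigma> = z $ k0" using s0 by (simp add: field_simps)
    from arg_cong[where f="\<lambda>v. v $ i0", OF conjunct1[OF K]]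
    have "ys $ i0 = (ys $ i0 + y $ i0) / (1 + \<sigma>)" by (simp only: vector_scaleR_component vector_add_component) simp
    then have e2: "ys $ i0 * \<sigma> = y $ i0" using s0 by (simp add: field_simps)
    have "(zs $ k0 - mu (i0,k0) * ys $ i0) * \<sigma> = z $ k0 - mu (i0,k0) * y $ i0"
      using e1 e2 by (simp add: algebra_simps)
    then have "0 < (zs $ k0 - mu (i0,k0) * ys $ i0) * \<sigma>" using zk by simp
    then have "0 < zs $ k0 - mu (i0,k0) * ys $ i0" using s0 by (simp add: zero_less_mult_iff)
    then show "ys $ i0 * mu (i0,k0) < zs $ k0" by (simp add: mult.commute)
  qed

  have ex: "\<forall>i. \<exists>k. potentially_basic J mu lam (i,k)"
  proof
    fix i
    have R0: "R_mult J mu xi0 i = lam i" and x0: "\<forall>j. 0 \<le> xi0 $ j"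
      using xi0f by (auto simp: lp_feasible_def)
    have ne: "(\<Sum>k\<in>{k. (i,k) \<in> J}. mu (i,k) * xi0 $ (i,k)) \<noteq> 0"
      using R0 lam_pos[rule_format, of i] unfolding R_mult_def by simp
    have "\<exists>k\<in>{k. (i,k) \<in> J}. mu (i,k) * xi0 $ (i,k) \<noteq> 0"
    proof (rule ccontr)
      assume "\<not> (\<exists>k\<in>{k. (i,k) \<in> J}. mu (i,k) * xi0 $ (i,k) \<noteq> 0)"
      then have "\<forall>k\<in>{k. (i,k) \<in> J}. mu (i,k) * xi0 $ (i,k) = 0" by blast
      then have "(\<Sum>k\<in>{k. (i,k) \<in> J}. mu (i,k) * xi0 $ (i,k)) = 0" by (rule sum.neutral)
      with ne show False by simp
    qed
    then obtain k where kJ: "(i,k) \<in> J" and nz: "mu (i,k) * xi0 $ (i,k) \<noteq> 0"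
      by blast
    have "0 < xi0 $ (i,k)" using nz x0[rule_format, of "(i,k)"] by (cases "xi0 $ (i,k) = 0") auto
    moreover have "xi0 \<in> ?S" using xi0f by (simp add: Siff)
    ultimately show "\<exists>k. potentially_basic J mu lam (i,k)"
      using kJ unfolding potentially_basic_def by blast
  qed

  have ypos: "\<forall>i. 0 < ys $ i"
  proof
    fix i
    obtain k where k: "potentially_basic J mu lam (i,k)" using ex by blast
    then have "(i,k) \<in> J" by (simp add: potentially_basic_def)
    then have "0 < mu (i,k)" using mu_pos by blast
    moreover have "ys $ i * mu (i,k) = zs $ k" using pb k by blast
    moreover have "0 < zs $ k" using zpos by blast
    ultimately show "0 < ys $ i" by (metis zero_less_mult_pos2)
  qed

  show ?thesis using S_LP_polytope[OF opt_val] obj1 zpos pb an ex ypos by blast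
qed

end
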